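(* Let $X_B'\subseteq\mathbb{P}^5$ be the image of the morphism $$\eta:\mathbb{P}^2\ni(a:b:c)\longmapsto \big(a^3: b^3: c^3: a(b^2-c^2): b(a^2-c^2): c(a^2-b^2)\big)\in\mathbb{P}^5,$$ and let $Z\subset\mathbb{P}^2$ be the set of nine points $(1:0:0),(0:1:0),(0:0:1),(1:1:0),(1:-1:0),(1:0:1),(1:0:-1),(0:1:1),(0:1:-1)$. Then $X_B'$ is hypo-osculating; more precisely, $\dim \mathrm{Osc}^{(2)}_{\eta(Q)}X_B'=4$ for all $Q\in\mathbb{P}^2\setminus Z$, while $\dim\mathrm{Osc}^{(2)}_{\eta(Q)}X_B'=3$ for each of the nine points $Q\in Z$.
   Context: For a point $\eta(Q)$ of the surface $X_B'$ parametrized by $\eta$, the second osculating space $\mathrm{Osc}^{(2)}_{\eta(Q)}X_B'$ is the linear subspace of $\mathbb{P}^5$ spanned by the point and the partial derivatives of order $\le 2$ of the coordinate functions with respect to local parameters at the point, evaluated there (equivalently, the projectivized span of all second-order partial derivatives of the cubic forms defining $\eta$ with respect to $a,b,c$, evaluated at $Q$). A surface in $\mathbb{P}^5$ is hypo-osculating if this dimension is lower than the expected value $5$ at every point. *)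

theory Defs
  imports "HOL-Analysis.Analysis"
begin

text \<open>Homogeneous coordinates: a point (a:b:c) of P^2(C) is represented by a nonzero
  vector Q in complex^3 with Q$1 = a, Q$2 = b, Q$3 = c.  The morphism eta is given by
  its six cubic forms.\<close>

definition eta :: "complex^3 \<Rightarrow> complex^6" where
  "eta Q = (let a = Q$1; b = Q$2; c = Q$3 in
     vector [a^3, b^3, c^3, a*(b^2 - c^2), b*(a^2 - c^2), c*(a^2 - b^2)])"

definition pd :: "3 \<Rightarrow> (complex^3 \<Rightarrow> complex^6) \<Rightarrow> complex^3 \<Rightarrow> complex^6" where
  "pd i F Q = (\<chi> k. deriv (\<lambda>t. F (Q + t *s axis i 1) $ k) 0)"

text \<open>Vectors spanning (the affine cone over) the second osculating space at eta(Q):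
  the point together with all partial derivatives of order 1 and 2.\<close>

definition osc2_gens :: "complex^3 \<Rightarrow> (complex^6) set" where
  "osc2_gens Q = {eta Q} \<union> {pd i eta Q | i. True} \<union> {pd i (pd j eta) Q | i j. True}"

text \<open>Projective dimension of the second osculating space: linear dimension of the span
  (over C) minus one.\<close>

definition osc2_dim :: "complex^3 \<Rightarrow> int" where
  "osc2_dim Q = int (vec.dim (osc2_gens Q)) - 1"

definition Zreps :: "(complex^3) set" where
  "Zreps = {vector [1,0,0], vector [0,1,0], vector [0,0,1],
            vector [1,1,0], vector [1,-1,0], vector [1,0,1],
            vector [1,0,-1], vector [0,1,1], vector [0,1,-1]}"

definition inZ :: "complex^3 \<Rightarrow> bool" where
  "inZ Q \<longleftrightarrow> (\<exists>z\<in>Zreps. \<exists>c::complex. c \<noteq> 0 \<and> Q = c *s z)"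

definition hypo_osculating :: bool where
  "hypo_osculating \<longleftrightarrow> (\<forall>Q::complex^3. Q \<noteq> 0 \<longrightarrow> osc2_dim Q < 5)"

end

theory Submission
  imports Defs
begin

lemma dim5:
  fixes va vb vc vd ve :: "complex^6"
  assumes ind: "\<And>x1 x2 x3 x4 x5. x1 *s va + x2 *s vb + x3 *s vc + x4 *s vd + x5 *s ve = 0
     \<Longrightarrow> x1 = 0 \<and> x2 = 0 \<and> x3 = 0 \<and> x4 = 0 \<and> x5 = 0"
    and sub: "S \<subseteq> vec.span {va,vb,vc,vd,ve}" and sup: "{va,vb,vc,vd,ve} \<subseteq> S"
  shows "vec.dim S = 5"
proof -
  have d: "va \<noteq> vb" "va \<noteq> vc" "va \<noteq> vd" "va \<noteq> ve" "vb \<noteq> vc" "vb \<noteq> vd" "vb \<noteq> ve"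
     "vc \<noteq> vd" "vc \<noteq> ve" "vd \<noteq> ve"
    using ind[of 1 "-1" 0 0 0] ind[of 1 0 "-1" 0 0] ind[of 1 0 0 "-1" 0] ind[of 1 0 0 0 "-1"]
          ind[of 0 1 "-1" 0 0] ind[of 0 1 0 "-1" 0] ind[of 0 1 0 0 "-1"]
          ind[of 0 0 1 "-1" 0] ind[of 0 0 1 0 "-1"] ind[of 0 0 0 1 "-1"]
    by auto
  have "vec.independent {va,vb,vc,vd,ve}"
    unfolding vec.independent_explicit
  proof (intro conjI allI impI)
    fix c assume "(\<Sum>v\<in>{va,vb,vc,vd,ve}. c v *s v) = 0"
    then have "c va *s va + c vb *s vb + c vc *s vc + c vd *s vd + c ve *s ve = 0"
      using d by (simp add: add.assoc)
    then show "\<forall>v\<in>{va,vb,vc,vd,ve}. c v = 0" using ind by blast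
  qed simp
  moreover have "card {va,vb,vc,vd,ve} = 5" using d by simp
  ultimately show ?thesis using vec.dim_unique[OF sup sub] by blast
qed

lemma dim4:
  fixes va vb vc vd :: "complex^6"
  assumes ind: "\<And>x1 x2 x3 x4. x1 *s va + x2 *s vb + x3 *s vc + x4 *s vd = 0
     \<Longrightarrow> x1 = 0 \<and> x2 = 0 \<and> x3 = 0 \<and> x4 = 0"
    and sub: "S \<subseteq> vec.span {va,vb,vc,vd}" and sup: "{va,vb,vc,vd} \<subseteq> S"
  shows "vec.dim S = 4"
proof -
  have d: "va \<noteq> vb" "va \<noteq> vc" "va \<noteq> vd" "vb \<noteq> vc" "vb \<noteq> vd" "vc \<noteq> vd"
    using ind[of 1 "-1" 0 0] ind[of 1 0 "-1" 0] ind[of 1 0 0 "-1"]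
          ind[of 0 1 "-1" 0] ind[of 0 1 0 "-1"] ind[of 0 0 1 "-1"]
    by auto
  have "vec.independent {va,vb,vc,vd}"
    unfolding vec.independent_explicit
  proof (intro conjI allI impI)
    fix c assume "(\<Sum>v\<in>{va,vb,vc,vd}. c v *s v) = 0"
    then have "c va *s va + c vb *s vb + c vc *s vc + c vd *s vd = 0"
      using d by (simp add: add.assoc)
    then show "\<forall>v\<in>{va,vb,vc,vd}. c v = 0" using ind by blast
  qed simp
  moreover have "card {va,vb,vc,vd} = 4" using d by simp
  ultimately show ?thesis using vec.dim_unique[OF sup sub] by blast
qed

lemma in_span5:
  fixes va vb vc vd ve :: "complex^6"
  assumes "x = ka *s va + kb *s vb + kc *s vc + kd *s vd + ke *s ve"
  shows "x \<in> vec.span {va,vb,vc,vd,ve}"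
  unfolding assms
  by (intro vec.span_add vec.span_scale vec.span_base) auto

lemma in_span4:
  fixes va vb vc vd :: "complex^6"
  assumes "x = ka *s va + kb *s vb + kc *s vc + kd *s vd"
  shows "x \<in> vec.span {va,vb,vc,vd}"
  unfolding assms
  by (intro vec.span_add vec.span_scale vec.span_base) auto

lemma in_span6:
  fixes va vb vc vd ve vf :: "complex^6"
  assumes "x = ka *s va + kb *s vb + kc *s vc + kd *s vd + ke *s ve + kf *s vf"
  shows "x \<in> vec.span {va,vb,vc,vd,ve,vf}"
  unfolding assms
  by (intro vec.span_add vec.span_scale vec.span_base) auto

lemma exhaust_6: fixes x :: 6 shows "x = 1 \<or> x = 2 \<or> x = 3 \<or> x = 4 \<or> x = 5 \<or> x = 6"
proof (induct x)
  case (of_int z)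
  then have "z = 0 \<or> z = 1 \<or> z = 2 \<or> z = 3 \<or> z = 4 \<or> z = 5" by fastforce
  then show ?case by auto
qed

lemma vec6_nth [simp]:
  "(vector [a1,a2,a3,a4,a5,a6] :: complex^6) $ 1 = a1"
  "(vector [a1,a2,a3,a4,a5,a6] :: complex^6) $ 2 = a2"
  "(vector [a1,a2,a3,a4,a5,a6] :: complex^6) $ 3 = a3"
  "(vector [a1,a2,a3,a4,a5,a6] :: complex^6) $ 4 = a4"
  "(vector [a1,a2,a3,a4,a5,a6] :: complex^6) $ 5 = a5"
  "(vector [a1,a2,a3,a4,a5,a6] :: complex^6) $ 6 = a6"
  by (simp_all add: vector_def)

lemma forall_6: "(\<forall>i::6. P i) \<longleftrightarrow> P 1 \<and> P 2 \<and> P 3 \<and> P 4 \<and> P 5 \<and> P 6"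
proof
  assume "P 1 \<and> P 2 \<and> P 3 \<and> P 4 \<and> P 5 \<and> P 6"
  then show "\<forall>i. P i"
  proof (intro allI)
    fix i :: 6
    assume h: "P 1 \<and> P 2 \<and> P 3 \<and> P 4 \<and> P 5 \<and> P 6"
    from exhaust_6[of i] show "P i" by (elim disjE) (use h in simp_all)
  qed
qed simp

lemma vec6_eq_iff: "(x::complex^6) = y \<longleftrightarrow>
   x$1 = y$1 \<and> x$2 = y$2 \<and> x$3 = y$3 \<and> x$4 = y$4 \<and> x$5 = y$5 \<and> x$6 = y$6"
  unfolding vec_eq_iff forall_6 ..

lemma vec6_add [simp]: "(vector [a1,a2,a3,a4,a5,a6] :: complex^6) + vector [b1,b2,b3,b4,b5,b6]
   = vector [a1+b1,a2+b2,a3+b3,a4+b4,a5+b5,a6+b6]"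
  by (simp add: vec6_eq_iff)

lemma vec6_scale [simp]: "k *s (vector [a1,a2,a3,a4,a5,a6] :: complex^6)
   = vector [k*a1,k*a2,k*a3,k*a4,k*a5,k*a6]"
  by (simp add: vec6_eq_iff)

lemma vec6_eq [simp]: "((vector [a1,a2,a3,a4,a5,a6] :: complex^6) = vector [b1,b2,b3,b4,b5,b6])
   \<longleftrightarrow> a1 = b1 \<and> a2 = b2 \<and> a3 = b3 \<and> a4 = b4 \<and> a5 = b5 \<and> a6 = b6"
  by (simp add: vec6_eq_iff)

lemma vec6_eq0 [simp]: "((vector [a1,a2,a3,a4,a5,a6] :: complex^6) = 0)
   \<longleftrightarrow> a1 = 0 \<and> a2 = 0 \<and> a3 = 0 \<and> a4 = 0 \<and> a5 = 0 \<and> a6 = 0"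
  by (simp add: vec6_eq_iff)

definition D1 :: "complex^3 \<Rightarrow> complex^3 \<Rightarrow> complex^6" where
 "D1 Q u = (let a = Q$1; b = Q$2; c = Q$3; u1 = u$1; u2 = u$2; u3 = u$3 in
   vector [3*a^2*u1, 3*b^2*u2, 3*c^2*u3, u1*(b^2-c^2) + a*(2*b*u2 - 2*c*u3),
     u2*(a^2-c^2) + b*(2*a*u1 - 2*c*u3), u3*(a^2-b^2) + c*(2*a*u1 - 2*b*u2)])"

definition D2 :: "complex^3 \<Rightarrow> complex^3 \<Rightarrow> complex^3 \<Rightarrow> complex^6" where
 "D2 Q u w = (let a = Q$1; b = Q$2; c = Q$3; u1 = u$1; u2 = u$2; u3 = u$3;
    w1 = w$1; w2 = w$2; w3 = w$3 in
   vector [6*a*u1*w1, 6*b*u2*w2, 6*c*u3*w3,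
     w1*(2*b*u2 - 2*c*u3) + u1*(2*b*w2 - 2*c*w3) + a*(2*u2*w2 - 2*u3*w3),
     w2*(2*a*u1 - 2*c*u3) + u2*(2*a*w1 - 2*c*w3) + b*(2*u1*w1 - 2*u3*w3),
     w3*(2*a*u1 - 2*b*u2) + u3*(2*a*w1 - 2*b*w2) + c*(2*u1*w1 - 2*u2*w2)])"

lemma pd_eta: "pd i eta Q = D1 Q (axis i 1)"
  unfolding pd_def vec_eq_iff
proof
  fix k :: 6
  define u :: "complex^3" where "u = axis i 1"
  have "deriv (\<lambda>t. eta (Q + t *s u) $ k) 0 = D1 Q u $ k"
    using exhaust_6[of k]
    apply (elim disjE)
    apply (simp_all add: eta_def D1_def Let_def)
    apply (rule DERIV_imp_deriv; (rule derivative_eq_intros refl)+; simp add: algebra_simps)+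
    done
  then show "(\<chi> k. deriv (\<lambda>t. eta (Q + t *s axis i 1) $ k) 0) $ k = D1 Q (axis i 1) $ k"
    by (simp add: u_def)
qed

lemma pd_eta_fun: "pd i eta = (\<lambda>Q. D1 Q (axis i 1))"
  by (rule ext, rule pd_eta)

lemma pd_pd_eta: "pd j (pd i eta) Q = D2 Q (axis i 1) (axis j 1)"
  unfolding pd_eta_fun pd_def vec_eq_iff
proof
  fix k :: 6
  define u :: "complex^3" where "u = axis i 1"
  define w :: "complex^3" where "w = axis j 1"
  have "deriv (\<lambda>t. D1 (Q + t *s w) u $ k) 0 = D2 Q u w $ k"
    using exhaust_6[of k]
    apply (elim disjE)
    apply (simp_all add: D2_def D1_def Let_def)
    apply (rule DERIV_imp_deriv; (rule derivative_eq_intros refl)+; simp add: algebra_simps)+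
    done
  then show "(\<chi> k. deriv (\<lambda>t. D1 (Q + t *s axis j 1) (axis i 1) $ k) 0) $ k = D2 Q (axis i 1) (axis j 1) $ k"
    by (simp add: u_def w_def)
qed

definition Hs :: "complex \<Rightarrow> complex \<Rightarrow> complex \<Rightarrow> (complex^6) set" where
  "Hs a b c = {vector[6*a,0,0,0,2*b,2*c], vector[0,6*b,0,2*a,0,-2*c], vector[0,0,6*c,-2*a,-2*b,0],
     vector[0,0,0,2*b,2*a,0], vector[0,0,0,-2*c,0,2*a], vector[0,0,0,0,-2*c,-2*b]}"

lemma D2_vals:
  "D2 Q (axis 1 1) (axis 1 1) = vector[6*Q$1,0,0,0,2*Q$2,2*Q$3]"
  "D2 Q (axis 1 1) (axis 2 1) = vector[0,0,0,2*Q$2,2*Q$1,0]"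
  "D2 Q (axis 1 1) (axis 3 1) = vector[0,0,0,-2*Q$3,0,2*Q$1]"
  "D2 Q (axis 2 1) (axis 1 1) = vector[0,0,0,2*Q$2,2*Q$1,0]"
  "D2 Q (axis 2 1) (axis 2 1) = vector[0,6*Q$2,0,2*Q$1,0,-2*Q$3]"
  "D2 Q (axis 2 1) (axis 3 1) = vector[0,0,0,0,-2*Q$3,-2*Q$2]"
  "D2 Q (axis 3 1) (axis 1 1) = vector[0,0,0,-2*Q$3,0,2*Q$1]"
  "D2 Q (axis 3 1) (axis 2 1) = vector[0,0,0,0,-2*Q$3,-2*Q$2]"
  "D2 Q (axis 3 1) (axis 3 1) = vector[0,0,6*Q$3,-2*Q$1,-2*Q$2,0]"
  by (simp_all add: D2_def axis_def Let_def)

lemma second_set: "{pd i (pd j eta) Q | i j. True} = Hs (Q$1) (Q$2) (Q$3)"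
proof -
  have e: "\<And>i j. pd i (pd j eta) Q \<in> Hs (Q$1) (Q$2) (Q$3)"
  proof -
    fix i j :: 3
    show "pd i (pd j eta) Q \<in> Hs (Q$1) (Q$2) (Q$3)"
      unfolding pd_pd_eta using exhaust_3[of i] exhaust_3[of j]
      by (elim disjE) (simp_all only: D2_vals Hs_def insert_iff simp_thms)
  qed
  have f: "x \<in> Hs (Q$1) (Q$2) (Q$3) \<Longrightarrow> \<exists>i j. x = pd i (pd j eta) Q" for x
    unfolding pd_pd_eta Hs_def
    apply (elim insertE)
    subgoal by (rule exI[of _ 1], rule exI[of _ 1]) (simp only: D2_vals)
    subgoal by (rule exI[of _ 2], rule exI[of _ 2]) (simp only: D2_vals)
    subgoal by (rule exI[of _ 3], rule exI[of _ 3]) (simp only: D2_vals)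
    subgoal by (rule exI[of _ 2], rule exI[of _ 1]) (simp only: D2_vals)
    subgoal by (rule exI[of _ 3], rule exI[of _ 1]) (simp only: D2_vals)
    subgoal by (rule exI[of _ 3], rule exI[of _ 2]) (simp only: D2_vals)
    by simp
  show ?thesis using e f by blast
qed

lemma D1_vals:
  "D1 Q (axis 1 1) = vector[3*(Q$1)^2, 0, 0, (Q$2)^2 - (Q$3)^2, 2*Q$1*Q$2, 2*Q$1*Q$3]"
  "D1 Q (axis 2 1) = vector[0, 3*(Q$2)^2, 0, 2*Q$1*Q$2, (Q$1)^2 - (Q$3)^2, -2*Q$2*Q$3]"
  "D1 Q (axis 3 1) = vector[0, 0, 3*(Q$3)^2, -2*Q$1*Q$3, -2*Q$2*Q$3, (Q$1)^2 - (Q$2)^2]"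
  by (simp_all add: D1_def axis_def Let_def)

lemma eta_val: "eta Q = vector[(Q$1)^3, (Q$2)^3, (Q$3)^3, Q$1*((Q$2)^2-(Q$3)^2),
   Q$2*((Q$1)^2-(Q$3)^2), Q$3*((Q$1)^2-(Q$2)^2)]"
  by (simp add: eta_def Let_def)

lemma span_gens: "vec.span (osc2_gens Q) = vec.span (Hs (Q$1) (Q$2) (Q$3))"
proof -
  define a where "a = Q$1"
  define b where "b = Q$2"
  define c where "c = Q$3"
  have H: "Hs a b c \<subseteq> osc2_gens Q" unfolding osc2_gens_def a_def b_def c_def second_set[symmetric]
    by blast
  have "eta Q \<in> vec.span (Hs a b c)"
    unfolding Hs_def eta_val a_def[symmetric] b_def[symmetric] c_def[symmetric]
    by (rule in_span6[where ka="a^2/6" and kb="b^2/6" and kc="c^2/6" and kd="a*b/3" and ke="a*c/3" and kf="b*c/3"])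
       (simp add: field_simps power2_eq_square power3_eq_cube)
  moreover have "pd i eta Q \<in> vec.span (Hs a b c)" for i
  proof -
    have "i = 1 \<or> i = 2 \<or> i = 3" by (rule exhaust_3)
    then show ?thesis
      unfolding pd_eta Hs_def
      apply (elim disjE; hypsubst)
      unfolding D1_vals a_def[symmetric] b_def[symmetric] c_def[symmetric]
      subgoal by (rule in_span6[where ka="a/2" and kb="0" and kc="0" and kd="b/2" and ke="c/2" and kf="0"])
         (simp add: field_simps power2_eq_square)
      subgoal by (rule in_span6[where ka="0" and kb="b/2" and kc="0" and kd="a/2" and ke="0" and kf="c/2"])
         (simp add: field_simps power2_eq_square)
      subgoal by (rule in_span6[where ka="0" and kb="0" and kc="c/2" and kd="0" and ke="a/2" and kf="b/2"])
         (simp add: field_simps power2_eq_square)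
      done
  qed
  ultimately have G: "osc2_gens Q \<subseteq> vec.span (Hs a b c)"
    using H vec.span_base unfolding osc2_gens_def second_set a_def b_def c_def by blast
  have "Hs a b c \<subseteq> vec.span (osc2_gens Q)" using H vec.span_superset by blast
  then show ?thesis using G vec.span_eq unfolding a_def b_def c_def by blast
qed

lemma dim_generic:
  assumes "a \<noteq> 0" "b \<noteq> 0" "c \<noteq> 0"
  shows "vec.dim (Hs a b c) = 5"
  apply (rule dim5[where va="vector[6*a,0,0,0,2*b,2*c]" and vb="vector[0,6*b,0,2*a,0,-2*c]"
     and vc="vector[0,0,6*c,-2*a,-2*b,0]" and vd="vector[0,0,0,2*b,2*a,0]" and ve="vector[0,0,0,-2*c,0,2*a]"])
  subgoal for x1 x2 x3 x4 x5
  proof -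
    assume h: "x1 *s vector[6*a,0,0,0,2*b,2*c] + x2 *s vector[0,6*b,0,2*a,0,-2*c] +
     x3 *s vector[0,0,6*c,-2*a,-2*b,0] + x4 *s vector[0,0,0,2*b,2*a,0] +
     x5 *s vector[0,0,0,-2*c,0,2*a] = (0::complex^6)"
    then have e: "x1 * a = 0" "x2 * b = 0" "x3 * c = 0"
      "x1*(2*b) + x3*(-2*b) + x4*(2*a) = 0" "x1*(2*c) + x2*(-2*c) + x5*(2*a) = 0"
      by (simp_all add: algebra_simps)
    then have "x1 = 0" "x2 = 0" "x3 = 0" using assms by simp_all
    then show ?thesis using e assms by simp
  qed
  subgoal
    apply (simp only: Hs_def mult_zero_right mult_zero_left)
    apply (intro insert_subsetI empty_subsetI)
    apply (rule vec.span_base, simp only: insert_iff simp_thms)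
apply (rule vec.span_base, simp only: insert_iff simp_thms)
apply (rule vec.span_base, simp only: insert_iff simp_thms)
apply (rule vec.span_base, simp only: insert_iff simp_thms)
apply (rule vec.span_base, simp only: insert_iff simp_thms)
    apply (rule in_span5[where ka=0 and kb=0 and kc=0 and kd="-c/a" and ke="-b/a"])
    using assms by (simp add: field_simps)
  subgoal by (simp only: Hs_def mult_zero_right mult_zero_left) blast
  done

lemma dim_a0:
  assumes "b \<noteq> 0" "c \<noteq> 0" "b^2 \<noteq> c^2"
  shows "vec.dim (Hs 0 b c) = 5"
  apply (rule dim5[where va="vector[0,0,0,0,2*b,2*c]" and vb="vector[0,6*b,0,0,0,-2*c]"
     and vc="vector[0,0,6*c,0,-2*b,0]" and vd="vector[0,0,0,2*b,0,0]" and ve="vector[0,0,0,0,-2*c,-2*b]"])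
  subgoal for x1 x2 x3 x4 x5
  proof -
    assume h: "x1 *s vector [0, 0, 0, 0, 2 * b, 2 * c] + x2 *s vector [0, 6 * b, 0, 0, 0, - 2 * c] +
     x3 *s vector [0, 0, 6 * c, 0, - 2 * b, 0] + x4 *s vector [0, 0, 0, 2 * b, 0, 0] +
     x5 *s vector [0, 0, 0, 0, - 2 * c, - 2 * b] = (0::complex^6)"
    then have e: "x2 = 0" "x3 = 0" "x4 = 0" "x1*b = x5*c" "x1 * c = x5 * b" using assms by auto
    then have "x1 * (b^2 - c^2) = 0" by algebra
    then have "x1 = 0" using assms by simp
    then show ?thesis using e assms by auto
  qed
  subgoal
    apply (simp only: Hs_def mult_zero_right mult_zero_left)
    apply (intro insert_subsetI empty_subsetI)
    apply (rule vec.span_base, simp only: insert_iff simp_thms)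
apply (rule vec.span_base, simp only: insert_iff simp_thms)
apply (rule vec.span_base, simp only: insert_iff simp_thms)
apply (rule vec.span_base, simp only: insert_iff simp_thms)
    prefer 2 apply (rule vec.span_base, simp only: insert_iff simp_thms)
    apply (rule in_span5[where ka=0 and kb=0 and kc=0 and kd="-c/b" and ke="0"])
    using assms by (simp add: field_simps)
  subgoal by (simp only: Hs_def mult_zero_right mult_zero_left) blast
  done

lemma dim_b0:
  assumes "a \<noteq> 0" "c \<noteq> 0" "a^2 \<noteq> c^2"
  shows "vec.dim (Hs a 0 c) = 5"
  apply (rule dim5[where va="vector[6*a,0,0,0,0,2*c]" and vb="vector[0,0,0,2*a,0,-2*c]"
     and vc="vector[0,0,6*c,-2*a,0,0]" and vd="vector[0,0,0,0,2*a,0]" and ve="vector[0,0,0,-2*c,0,2*a]"])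
  subgoal for x1 x2 x3 x4 x5
  proof -
    assume h: "x1 *s vector[6*a,0,0,0,0,2*c] + x2 *s vector[0,0,0,2*a,0,-2*c] +
     x3 *s vector[0,0,6*c,-2*a,0,0] + x4 *s vector[0,0,0,0,2*a,0] +
     x5 *s vector[0,0,0,-2*c,0,2*a] = (0::complex^6)"
    then have e: "x1 = 0" "x3 = 0" "x4 = 0" "x2*a = x5*c" "x2 * c = x5 * a" using assms by auto
    then have "x2 * (a^2 - c^2) = 0" by algebra
    then have "x2 = 0" using assms by simp
    then show ?thesis using e assms by auto
  qed
  subgoal
    apply (simp only: Hs_def mult_zero_right mult_zero_left)
    apply (intro insert_subsetI empty_subsetI)
    apply (rule vec.span_base, simp only: insert_iff simp_thms)
apply (rule vec.span_base, simp only: insert_iff simp_thms)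
apply (rule vec.span_base, simp only: insert_iff simp_thms)
apply (rule vec.span_base, simp only: insert_iff simp_thms)
apply (rule vec.span_base, simp only: insert_iff simp_thms)
    apply (rule in_span5[where ka=0 and kb=0 and kc=0 and kd="-c/a" and ke="0"])
    using assms by (simp add: field_simps)
  subgoal by (simp only: Hs_def mult_zero_right mult_zero_left) blast
  done

lemma dim_c0:
  assumes "a \<noteq> 0" "b \<noteq> 0" "a^2 \<noteq> b^2"
  shows "vec.dim (Hs a b 0) = 5"
  apply (rule dim5[where va="vector[6*a,0,0,0,2*b,0]" and vb="vector[0,6*b,0,2*a,0,0]"
     and vc="vector[0,0,0,-2*a,-2*b,0]" and vd="vector[0,0,0,2*b,2*a,0]" and ve="vector[0,0,0,0,0,2*a]"])
  subgoal for x1 x2 x3 x4 x5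
  proof -
    assume h: "x1 *s vector[6*a,0,0,0,2*b,0] + x2 *s vector[0,6*b,0,2*a,0,0] +
     x3 *s vector[0,0,0,-2*a,-2*b,0] + x4 *s vector[0,0,0,2*b,2*a,0] +
     x5 *s vector[0,0,0,0,0,2*a] = (0::complex^6)"
    then have e: "x1 = 0" "x2 = 0" "x5 = 0" "x3*a = x4*b" "x3 * b = x4 * a" using assms by auto
    then have "x3 * (a^2 - b^2) = 0" by algebra
    then have "x3 = 0" using assms by simp
    then show ?thesis using e assms by auto
  qed
  subgoal
    apply (simp only: Hs_def mult_zero_right mult_zero_left)
    apply (intro insert_subsetI empty_subsetI)
    apply (rule vec.span_base, simp only: insert_iff simp_thms)
apply (rule vec.span_base, simp only: insert_iff simp_thms)
apply (rule vec.span_base, simp only: insert_iff simp_thms)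
apply (rule vec.span_base, simp only: insert_iff simp_thms)
apply (rule vec.span_base, simp only: insert_iff simp_thms)
    apply (rule in_span5[where ka=0 and kb=0 and kc=0 and kd="0" and ke="-b/a"])
    using assms by (simp add: field_simps)
  subgoal by (simp only: Hs_def mult_zero_right mult_zero_left) blast
  done

lemma dim_ab0:
  assumes "c \<noteq> 0"
  shows "vec.dim (Hs 0 0 c) = 4"
  apply (rule dim4[where va="vector[0,0,0,0,0,2*c]" and vb="vector[0,0,6*c,0,0,0]" and vc="vector[0,0,0,- 2*c,0,0]" and vd="vector[0,0,0,0,- 2*c,0]"])
  subgoal using assms by auto
  subgoal
    apply (simp only: Hs_def mult_zero_right mult_zero_left)
    apply (intro insert_subsetI empty_subsetI)
    apply (rule vec.span_base, simp only: insert_iff simp_thms)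
    apply (rule in_span4[where ka="-1" and kb="0" and kc="0" and kd="0"], use assms in \<open>simp add: field_simps power2_eq_square\<close>)
    apply (rule vec.span_base, simp only: insert_iff simp_thms)
    apply (rule in_span4[where ka="0" and kb="0" and kc="0" and kd="0"], use assms in \<open>simp add: field_simps power2_eq_square\<close>)
    apply (rule vec.span_base, simp only: insert_iff simp_thms)
    apply (rule vec.span_base, simp only: insert_iff simp_thms)
    done
  subgoal by (simp only: Hs_def mult_zero_right mult_zero_left) blast
  done

lemma dim_ac0:
  assumes "b \<noteq> 0"
  shows "vec.dim (Hs 0 b 0) = 4"
  apply (rule dim4[where va="vector[0,0,0,0,2*b,0]" and vb="vector[0,6*b,0,0,0,0]" and vc="vector[0,0,0,2*b,0,0]" and vd="vector[0,0,0,0,0,- 2*b]"])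
  subgoal using assms by auto
  subgoal
    apply (simp only: Hs_def mult_zero_right mult_zero_left)
    apply (intro insert_subsetI empty_subsetI)
    apply (rule vec.span_base, simp only: insert_iff simp_thms)
    apply (rule vec.span_base, simp only: insert_iff simp_thms)
    apply (rule in_span4[where ka="-1" and kb="0" and kc="0" and kd="0"], use assms in \<open>simp add: field_simps power2_eq_square\<close>)
    apply (rule vec.span_base, simp only: insert_iff simp_thms)
    apply (rule in_span4[where ka="0" and kb="0" and kc="0" and kd="0"], use assms in \<open>simp add: field_simps power2_eq_square\<close>)
    apply (rule vec.span_base, simp only: insert_iff simp_thms)
    done
  subgoal by (simp only: Hs_def mult_zero_right mult_zero_left) blast
  done

lemma dim_bc0:
  assumes "a \<noteq> 0"
  shows "vec.dim (Hs a 0 0) = 4"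
  apply (rule dim4[where va="vector[6*a,0,0,0,0,0]" and vb="vector[0,0,0,2*a,0,0]" and vc="vector[0,0,0,0,2*a,0]" and vd="vector[0,0,0,0,0,2*a]"])
  subgoal using assms by auto
  subgoal
    apply (simp only: Hs_def mult_zero_right mult_zero_left)
    apply (intro insert_subsetI empty_subsetI)
    apply (rule vec.span_base, simp only: insert_iff simp_thms)
    apply (rule vec.span_base, simp only: insert_iff simp_thms)
    apply (rule in_span4[where ka="0" and kb="-1" and kc="0" and kd="0"], use assms in \<open>simp add: field_simps power2_eq_square\<close>)
    apply (rule vec.span_base, simp only: insert_iff simp_thms)
    apply (rule vec.span_base, simp only: insert_iff simp_thms)
    apply (rule in_span4[where ka="0" and kb="0" and kc="0" and kd="0"], use assms in \<open>simp add: field_simps power2_eq_square\<close>)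
    done
  subgoal by (simp only: Hs_def mult_zero_right mult_zero_left) blast
  done

lemma dim_a0_sq:
  assumes "b \<noteq> 0" "c \<noteq> 0" "b^2 = c^2"
  shows "vec.dim (Hs 0 b c) = 4"
  apply (rule dim4[where va="vector[0,0,0,0,2*b,2*c]" and vb="vector[0,6*b,0,0,0,- 2*c]" and vc="vector[0,0,6*c,0,- 2*b,0]" and vd="vector[0,0,0,2*b,0,0]"])
  subgoal using assms by auto
  subgoal
    apply (simp only: Hs_def mult_zero_right mult_zero_left)
    apply (intro insert_subsetI empty_subsetI)
    apply (rule vec.span_base, simp only: insert_iff simp_thms)
    apply (rule vec.span_base, simp only: insert_iff simp_thms)
    apply (rule vec.span_base, simp only: insert_iff simp_thms)
    apply (rule vec.span_base, simp only: insert_iff simp_thms)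
    apply (rule in_span4[where ka="0" and kb="0" and kc="0" and kd="-c/b"], use assms in \<open>simp add: field_simps power2_eq_square\<close>)
    apply (rule in_span4[where ka="-c/b" and kb="0" and kc="0" and kd="0"], use assms in \<open>simp add: field_simps power2_eq_square\<close>)
    done
  subgoal by (simp only: Hs_def mult_zero_right mult_zero_left) blast
  done

lemma dim_b0_sq:
  assumes "a \<noteq> 0" "c \<noteq> 0" "a^2 = c^2"
  shows "vec.dim (Hs a 0 c) = 4"
  apply (rule dim4[where va="vector[6*a,0,0,0,0,2*c]" and vb="vector[0,0,0,2*a,0,- 2*c]" and vc="vector[0,0,6*c,- 2*a,0,0]" and vd="vector[0,0,0,0,2*a,0]"])
  subgoal using assms by auto
  subgoal
    apply (simp only: Hs_def mult_zero_right mult_zero_left)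
    apply (intro insert_subsetI empty_subsetI)
    apply (rule vec.span_base, simp only: insert_iff simp_thms)
    apply (rule vec.span_base, simp only: insert_iff simp_thms)
    apply (rule vec.span_base, simp only: insert_iff simp_thms)
    apply (rule vec.span_base, simp only: insert_iff simp_thms)
    apply (rule in_span4[where ka="0" and kb="-c/a" and kc="0" and kd="0"], use assms in \<open>simp add: field_simps power2_eq_square\<close>)
    apply (rule in_span4[where ka="0" and kb="0" and kc="0" and kd="-c/a"], use assms in \<open>simp add: field_simps power2_eq_square\<close>)
    done
  subgoal by (simp only: Hs_def mult_zero_right mult_zero_left) blast
  done

lemma dim_c0_sq:
  assumes "a \<noteq> 0" "b \<noteq> 0" "a^2 = b^2"
  shows "vec.dim (Hs a b 0) = 4"
  apply (rule dim4[where va="vector[6*a,0,0,0,2*b,0]" and vb="vector[0,6*b,0,2*a,0,0]" and vc="vector[0,0,0,2*b,2*a,0]" and vd="vector[0,0,0,0,0,2*a]"])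
  subgoal using assms by auto
  subgoal
    apply (simp only: Hs_def mult_zero_right mult_zero_left)
    apply (intro insert_subsetI empty_subsetI)
    apply (rule vec.span_base, simp only: insert_iff simp_thms)
    apply (rule vec.span_base, simp only: insert_iff simp_thms)
    apply (rule in_span4[where ka="0" and kb="0" and kc="-a/b" and kd="0"], use assms in \<open>simp add: field_simps power2_eq_square\<close>)
    apply (rule vec.span_base, simp only: insert_iff simp_thms)
    apply (rule vec.span_base, simp only: insert_iff simp_thms)
    apply (rule in_span4[where ka="0" and kb="0" and kc="0" and kd="-b/a"], use assms in \<open>simp add: field_simps power2_eq_square\<close>)
    done
  subgoal by (simp only: Hs_def mult_zero_right mult_zero_left) blast
  done

lemma vec3_eq_iff: "(x::complex^3) = y \<longleftrightarrow> x$1 = y$1 \<and> x$2 = y$2 \<and> x$3 = y$3"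
  unfolding vec_eq_iff forall_3 ..

lemma osc2_dim_Hs: "osc2_dim Q = int (vec.dim (Hs (Q$1) (Q$2) (Q$3))) - 1"
  unfolding osc2_dim_def by (metis span_gens vec.dim_span)

lemma inZ_I:
  assumes "z \<in> Zreps" "k \<noteq> 0" "Q = k *s z"
  shows "inZ Q"
  using assms unfolding inZ_def by blast

lemma dim_inZ:
  assumes "inZ Q"
  shows "vec.dim (Hs (Q$1) (Q$2) (Q$3)) = 4"
proof -
  obtain z k where z: "z \<in> Zreps" and k: "k \<noteq> 0" and Q: "Q = k *s z"
    using assms unfolding inZ_def by blast
  from z show ?thesis unfolding Zreps_def
    apply (elim insertE emptyE)
    using k unfolding Q
    apply (simp_all add: dim_ab0 dim_ac0 dim_bc0)
    subgoal using dim_c0_sq[of k k] by simp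
    subgoal using dim_c0_sq[of k "-k"] by simp
    subgoal using dim_b0_sq[of k k] by simp
    subgoal using dim_b0_sq[of k "-k"] by simp
    subgoal using dim_a0_sq[of k k] by simp
    subgoal using dim_a0_sq[of k "-k"] by simp
    done
qed

lemma dim_notZ:
  assumes "Q \<noteq> 0" "\<not> inZ Q"
  shows "vec.dim (Hs (Q$1) (Q$2) (Q$3)) = 5"
proof -
  define a where "a = Q$1"
  define b where "b = Q$2"
  define c where "c = Q$3"
  have Qe: "Q = vector[a,b,c]" unfolding vec3_eq_iff a_def b_def c_def by simp
  have nz: "\<not> (a = 0 \<and> b = 0 \<and> c = 0)" using assms(1) unfolding Qe vec3_eq_iff by auto
  have Z: "inZ (vector[a,b,c])" if "k \<noteq> 0" "vector[a,b,c] = k *s z" "z \<in> Zreps" for k z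
    using inZ_I[OF that(3,1,2)] .
  have notZ: "\<not> inZ (vector[a,b,c])" using assms(2) Qe by simp
  have sq: "\<And>x y::complex. x^2 = y^2 \<Longrightarrow> y = x \<or> y = - x" by (simp add: power2_eq_iff) (metis minus_equation_iff)
  have "vec.dim (Hs a b c) = 5"
  proof (cases "a = 0")
    case a0: True
    have "b \<noteq> 0"
      using Z[of c "vector[0,0,1]"] nz notZ a0 by (auto simp: vec3_eq_iff Zreps_def)
    moreover have "c \<noteq> 0"
      using Z[of b "vector[0,1,0]"] nz notZ a0 by (auto simp: vec3_eq_iff Zreps_def)
    moreover have "b^2 \<noteq> c^2"
    proof
      assume "b^2 = c^2"
      then have "c = b \<or> c = - b" using sq by blast
      then show False
        using Z[of b "vector[0,1,1]"] Z[of b "vector[0,1,-1]"] notZ a0 \<open>b \<noteq> 0\<close>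
        by (auto simp: vec3_eq_iff Zreps_def)
    qed
    ultimately show ?thesis using dim_a0 a0 by simp
  next
    case an: False
    show ?thesis
    proof (cases "b = 0")
      case b0: True
      have "c \<noteq> 0"
        using Z[of a "vector[1,0,0]"] notZ b0 an by (auto simp: vec3_eq_iff Zreps_def)
      moreover have "a^2 \<noteq> c^2"
      proof
        assume "a^2 = c^2"
        then have "c = a \<or> c = - a" using sq by blast
        then show False
          using Z[of a "vector[1,0,1]"] Z[of a "vector[1,0,-1]"] notZ b0 an
          by (auto simp: vec3_eq_iff Zreps_def)
      qed
      ultimately show ?thesis using dim_b0 b0 an by simp
    next
      case bn: False
      show ?thesis
      proof (cases "c = 0")
        case c0: True
        have "a^2 \<noteq> b^2"
        proof
          assume "a^2 = b^2"
          then have "b = a \<or> b = - a" using sq by blast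
          then show False
            using Z[of a "vector[1,1,0]"] Z[of a "vector[1,-1,0]"] notZ c0 an
            by (auto simp: vec3_eq_iff Zreps_def)
        qed
        then show ?thesis using dim_c0 c0 an bn by simp
      next
        case False
        then show ?thesis using dim_generic an bn by simp
      qed
    qed
  qed
  then show ?thesis by (simp add: a_def b_def c_def)
qed

theorem mainTheorem5:
  shows "hypo_osculating
    \<and> (\<forall>Q::complex^3. Q \<noteq> 0 \<and> \<not> inZ Q \<longrightarrow> osc2_dim Q = 4)
    \<and> (\<forall>Q::complex^3. Q \<noteq> 0 \<and> inZ Q \<longrightarrow> osc2_dim Q = 3)"
proof -
  have A: "osc2_dim Q = 4" if "Q \<noteq> 0" "\<not> inZ Q" for Q :: "complex^3"
    using dim_notZ[OF that] osc2_dim_Hs[of Q] by simp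
  have B: "osc2_dim Q = 3" if "inZ Q" for Q :: "complex^3"
    using dim_inZ[OF that] osc2_dim_Hs[of Q] by simp
  have "hypo_osculating" unfolding hypo_osculating_def
  proof (intro allI impI)
    fix Q :: "complex^3" assume "Q \<noteq> 0"
    then show "osc2_dim Q < 5" using A B by (cases "inZ Q") auto
  qed
  then show ?thesis using A B by blast
qed

end
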